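(* Let $\mathcal F\subseteq\mathcal F_0$ be finite and $r_1=\max\{1,r(\mathcal F)\}$. Let $G$ be a finite graph of maximum degree $\Delta$, $\pi\colon V(G)\to\mathcal F$, and $\mathbf z\in\mathbb C^{\kappa+1}$ with $z_0\neq0$ and $|z_i|/|z_0|\le\big(\Delta\kappa e^2r_1(r_1+1)\big)^{-1}$ for $1\le i\le\kappa$. Then $Z_{\mathcal F}(G,\pi,\mathbf z)\neq0$, and, writing $P(t)=Z_{\mathcal F}(G,\pi,(z_0,tz_1,\dots,tz_\kappa))/\big(z_0^{|E(G)|}\prod_{v}f_v(\mathbf0)\big)$ (a polynomial in $t$ with $P(0)=1$), the Taylor series of $\log P(t)$ about $t=0$ converges absolutely at $t=1$.
   Context: $D=\{0,\dots,\kappa\}$; signatures $f\colon D^d\to\mathbb C$; $\mathcal F_0=\{f\mid f(\mathbf0)\neq0\}$; $r(f)=\max_{x\in D^d\setminus\{\mathbf0\}}|f(x)|/|f(\mathbf0)|$, $r(\mathcal F)=\max_{f\in\mathcal F}r(f)$. $G=(V,E)$ with fixed order on $E$, $E(v)$ the edges at $v$, $\pi$ assigns $f_v$ of arity $|E(v)|$, $Z_{\mathcal F}(G,\pi,\mathbf z)=\sum_{\sigma\in D^E}\prod_vf_v(\sigma|_{E(v)})\prod_{i=0}^\kappa z_i^{|\sigma|_i}$ with $|\sigma|_i=|\{e:\sigma(e)=i\}|$. *)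

theory Defs
  imports "HOL-Analysis.Analysis"
begin

text \<open>A signature of arity d over D = {0..kappa} is a pair (d, f) where f is read on
  lists of length d with entries in D.\<close>
type_synonym sig = "nat \<times> (nat list \<Rightarrow> complex)"

definition sig_dom :: "nat \<Rightarrow> nat \<Rightarrow> nat list set" where
  "sig_dom \<kappa> d = {xs. length xs = d \<and> set xs \<subseteq> {0..\<kappa>}}"

definition zero_val :: "sig \<Rightarrow> complex" where
  "zero_val f = snd f (replicate (fst f) 0)"

definition in_F0 :: "sig \<Rightarrow> bool" where
  "in_F0 f \<longleftrightarrow> zero_val f \<noteq> 0"

text \<open>r(f); the max over an empty set (arity 0) is taken to be 0, which is harmless
  since only max{1, r(F)} is used.\<close>
definition ratio_r :: "nat \<Rightarrow> sig \<Rightarrow> real" where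
  "ratio_r \<kappa> f = Max (insert 0 ((\<lambda>x. cmod (snd f x) / cmod (zero_val f)) `
       (sig_dom \<kappa> (fst f) - {replicate (fst f) 0})))"

definition ratio_rF :: "nat \<Rightarrow> sig set \<Rightarrow> real" where
  "ratio_rF \<kappa> F = Max (insert 0 (ratio_r \<kappa> ` F))"

text \<open>Graph: finite vertex set V, edges given as a distinct list es (the fixed order on E),
  each edge having a two-element set of endpoints in V (multi-edges allowed).\<close>
definition is_graph :: "'v set \<Rightarrow> ('e \<Rightarrow> 'v set) \<Rightarrow> 'e list \<Rightarrow> bool" where
  "is_graph V ends es \<longleftrightarrow> finite V \<and> distinct es \<and> (\<forall>e\<in>set es. ends e \<subseteq> V \<and> card (ends e) = 2)"

definition inc_edges :: "('e \<Rightarrow> 'v set) \<Rightarrow> 'e list \<Rightarrow> 'v \<Rightarrow> 'e list" where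
  "inc_edges ends es v = filter (\<lambda>e. v \<in> ends e) es"

definition max_degree :: "'v set \<Rightarrow> ('e \<Rightarrow> 'v set) \<Rightarrow> 'e list \<Rightarrow> nat" where
  "max_degree V ends es = Max (insert 0 ((\<lambda>v. length (inc_edges ends es v)) ` V))"

definition partition_fn ::
  "nat \<Rightarrow> 'v set \<Rightarrow> ('e \<Rightarrow> 'v set) \<Rightarrow> 'e list \<Rightarrow> ('v \<Rightarrow> sig) \<Rightarrow> (nat \<Rightarrow> complex) \<Rightarrow> complex" where
  "partition_fn \<kappa> V ends es \<pi> z =
     (\<Sum>\<sigma>\<in>PiE (set es) (\<lambda>_. {0..\<kappa>}).
        (\<Prod>v\<in>V. snd (\<pi> v) (map \<sigma> (inc_edges ends es v))) *
        (\<Prod>i=0..\<kappa>. z i ^ card {e\<in>set es. \<sigma> e = i}))"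

definition poly_P ::
  "nat \<Rightarrow> 'v set \<Rightarrow> ('e \<Rightarrow> 'v set) \<Rightarrow> 'e list \<Rightarrow> ('v \<Rightarrow> sig) \<Rightarrow> (nat \<Rightarrow> complex) \<Rightarrow> complex \<Rightarrow> complex" where
  "poly_P \<kappa> V ends es \<pi> z t =
     partition_fn \<kappa> V ends es \<pi> (\<lambda>i. if i = 0 then z 0 else t * z i) /
     (z 0 ^ length es * (\<Prod>v\<in>V. zero_val (\<pi> v)))"

end

theory Submission
  imports Defs "HOL-Complex_Analysis.Complex_Analysis"
begin


definition nbh :: "('e \<Rightarrow> 'e \<Rightarrow> bool) \<Rightarrow> 'e set \<Rightarrow> 'e set \<Rightarrow> 'e set" where
  "nbh ad A g = {f\<in>A. \<exists>h\<in>g. ad h f}"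
definition crel :: "('e \<Rightarrow> 'e \<Rightarrow> bool) \<Rightarrow> 'e set \<Rightarrow> ('e \<times> 'e) set" where
  "crel ad X = {(g,f). g\<in>X \<and> f\<in>X \<and> ad g f}"
definition ccomp :: "('e \<Rightarrow> 'e \<Rightarrow> bool) \<Rightarrow> 'e set \<Rightarrow> 'e \<Rightarrow> 'e set" where
  "ccomp ad X e = {f. (e,f) \<in> (crel ad X)\<^sup>*}"
definition conn :: "('e \<Rightarrow> 'e \<Rightarrow> bool) \<Rightarrow> 'e set \<Rightarrow> 'e \<Rightarrow> bool" where
  "conn ad g e \<longleftrightarrow> e \<in> g \<and> ccomp ad g e = g"

lemma comp_sub: assumes "e \<in> X" shows "ccomp ad X e \<subseteq> X"
proof
  fix f assume "f \<in> ccomp ad X e"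
  hence "(e,f) \<in> (crel ad X)\<^sup>*" by (simp add: ccomp_def)
  thus "f \<in> X" using assms by (induct rule: rtrancl_induct) (auto simp: crel_def)
qed

lemma comp_mono: assumes "X \<subseteq> Y" shows "ccomp ad X e \<subseteq> ccomp ad Y e"
proof -
  have "crel ad X \<subseteq> crel ad Y" using assms by (auto simp: crel_def)
  thus ?thesis unfolding ccomp_def using rtrancl_mono by blast
qed

lemma e_in_comp: "e \<in> ccomp ad X e" by (simp add: ccomp_def)

lemma comp_closed: "g \<in> ccomp ad X e \<Longrightarrow> f \<in> X \<Longrightarrow> g \<in> X \<Longrightarrow> ad g f \<Longrightarrow> f \<in> ccomp ad X e"
  unfolding ccomp_def by (auto simp: crel_def intro: rtrancl_into_rtrancl)

lemma comp_conn: assumes "e \<in> X" shows "conn ad (ccomp ad X e) e"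
proof -
  let ?C = "ccomp ad X e"
  have "?C \<subseteq> ccomp ad ?C e"
  proof
    fix f assume "f \<in> ?C"
    hence "(e,f) \<in> (crel ad X)\<^sup>*" by (simp add: ccomp_def)
    thus "f \<in> ccomp ad ?C e"
    proof (induct rule: rtrancl_induct)
      case base then show ?case by (simp add: e_in_comp)
    next
      case (step g f)
      have gC: "g \<in> ?C" using step(1) by (simp add: ccomp_def)
      have fC: "f \<in> ?C" using step(1,2) by (simp add: ccomp_def)
      show ?case using comp_closed[OF step(3) fC gC] step(2) by (auto simp: crel_def)
    qed
  qed
  moreover have "ccomp ad ?C e \<subseteq> ?C" using comp_mono[OF comp_sub[OF assms]] by blast
  ultimately show ?thesis by (auto simp: conn_def e_in_comp)
qed

lemma comp_sep: assumes "e \<in> X" "f \<in> X - ccomp ad X e" "g \<in> ccomp ad X e" shows "\<not> ad g f"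
  using comp_closed[of g ad X e f] assms comp_sub[OF assms(1)] by blast

lemma comp_union:
  assumes c: "conn ad g e" and Y: "Y \<inter> nbh ad A g = {}" "Y \<subseteq> A"
  shows "ccomp ad (g \<union> Y) e = g"
proof
  show "g \<subseteq> ccomp ad (g \<union> Y) e" using comp_mono[of g "g \<union> Y" ad e] c by (auto simp: conn_def)
next
  show "ccomp ad (g \<union> Y) e \<subseteq> g"
  proof
    fix f assume "f \<in> ccomp ad (g \<union> Y) e"
    hence "(e,f) \<in> (crel ad (g \<union> Y))\<^sup>*" by (simp add: ccomp_def)
    thus "f \<in> g"
    proof (induct rule: rtrancl_induct)
      case base then show ?case using c by (simp add: conn_def)
    next
      case (step h f)
      show ?case
      proof (rule ccontr)
        assume "f \<notin> g"
        hence "f \<in> Y" using step(2) by (auto simp: crel_def)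
        hence "f \<in> nbh ad A g" using step(2,3) Y(2) by (auto simp: crel_def nbh_def)
        thus False using \<open>f \<in> Y\<close> Y(1) by blast
      qed
    qed
  qed
qed

lemma decomp_sum:
  assumes A: "finite A" "e \<in> A" and rf: "\<forall>x\<in>A. ad x x"
  shows "(\<Sum>X\<in>{X. X \<subseteq> A \<and> e \<in> X}. F X) =
         (\<Sum>g\<in>{g. g \<subseteq> A \<and> conn ad g e}. \<Sum>Y\<in>Pow (A - nbh ad A g). F (g \<union> Y))"
proof -
  let ?G = "{g. g \<subseteq> A \<and> conn ad g e}"
  have fG: "finite ?G" by (rule finite_subset[of _ "Pow A"]) (use A(1) in auto)
  have "(\<Sum>g\<in>?G. \<Sum>Y\<in>Pow (A - nbh ad A g). F (g \<union> Y)) =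
        (\<Sum>p\<in>Sigma ?G (\<lambda>g. Pow (A - nbh ad A g)). F (fst p \<union> snd p))"
    using fG A(1) by (subst sum.Sigma) (auto simp: split_beta)
  also have "\<dots> = (\<Sum>X\<in>{X. X \<subseteq> A \<and> e \<in> X}. F X)"
  proof (rule sum.reindex_bij_witness[where i = "\<lambda>X. (ccomp ad X e, X - ccomp ad X e)"
        and j = "\<lambda>p. fst p \<union> snd p"])
    fix X assume X: "X \<in> {X. X \<subseteq> A \<and> e \<in> X}"
    show "fst (ccomp ad X e, X - ccomp ad X e) \<union> snd (ccomp ad X e, X - ccomp ad X e) = X"
      using comp_sub[of e X ad] X by auto
    show "(ccomp ad X e, X - ccomp ad X e) \<in> Sigma ?G (\<lambda>g. Pow (A - nbh ad A g))"
    proof -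
      have X1: "X \<subseteq> A" "e \<in> X" using X by auto
      have "X - ccomp ad X e \<subseteq> A - nbh ad A (ccomp ad X e)"
      proof
        fix f assume f: "f \<in> X - ccomp ad X e"
        have "f \<notin> nbh ad A (ccomp ad X e)"
          using comp_sep[OF X1(2) f] by (auto simp: nbh_def)
        thus "f \<in> A - nbh ad A (ccomp ad X e)" using f X1 by blast
      qed
      thus ?thesis using X1 comp_sub[OF X1(2), of ad] comp_conn[OF X1(2), of ad] by auto
    qed
  next
    fix p assume p: "p \<in> Sigma ?G (\<lambda>g. Pow (A - nbh ad A g))"
    obtain g Y where pg: "p = (g, Y)" by (cases p)
    have g: "g \<subseteq> A" "conn ad g e" and Y: "Y \<subseteq> A - nbh ad A g" using p pg by auto
    have gn: "g \<subseteq> nbh ad A g" using g rf by (auto simp: nbh_def)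
    have cu: "ccomp ad (g \<union> Y) e = g" using comp_union[OF g(2), of Y A] Y by auto
    show "(ccomp ad (fst p \<union> snd p) e, fst p \<union> snd p - ccomp ad (fst p \<union> snd p) e) = p"
      using cu pg Y gn by auto
    show "fst p \<union> snd p \<in> {X. X \<subseteq> A \<and> e \<in> X}" using pg g Y by (auto simp: conn_def)
    show "F (fst p \<union> snd p) = F (fst p \<union> snd p)" by simp
  qed
  finally show ?thesis by simp
qed

definition Zs :: "('e set \<Rightarrow> 'a::comm_ring_1) \<Rightarrow> 'e set \<Rightarrow> 'a" where
  "Zs \<Phi> A = (\<Sum>X\<in>Pow A. \<Phi> X)"

lemma Zs_rec:
  assumes A: "finite A" "e \<in> A" and rf: "\<forall>x\<in>A. ad x x"
   and mult: "\<And>g Y. g \<subseteq> A \<Longrightarrow> conn ad g e \<Longrightarrow> Y \<subseteq> A - nbh ad A g \<Longrightarrow> \<Phi> (g \<union> Y) = \<Phi> g * \<Phi> Y"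
  shows "Zs \<Phi> A = Zs \<Phi> (A - {e}) + (\<Sum>g\<in>{g. g \<subseteq> A \<and> conn ad g e}. \<Phi> g * Zs \<Phi> (A - nbh ad A g))"
proof -
  have PA: "Pow A = Pow (A - {e}) \<union> {X. X \<subseteq> A \<and> e \<in> X}" by auto
  have "Zs \<Phi> A = Zs \<Phi> (A - {e}) + (\<Sum>X\<in>{X. X \<subseteq> A \<and> e \<in> X}. \<Phi> X)"
    unfolding Zs_def using A by (subst PA, subst sum.union_disjoint) auto
  also have "(\<Sum>X\<in>{X. X \<subseteq> A \<and> e \<in> X}. \<Phi> X) =
         (\<Sum>g\<in>{g. g \<subseteq> A \<and> conn ad g e}. \<Sum>Y\<in>Pow (A - nbh ad A g). \<Phi> (g \<union> Y))"
    by (rule decomp_sum[where F=\<Phi> and ad=ad, OF A rf])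
  also have "\<dots> = (\<Sum>g\<in>{g. g \<subseteq> A \<and> conn ad g e}. \<Phi> g * Zs \<Phi> (A - nbh ad A g))"
  proof (rule sum.cong[OF refl])
    fix g assume g: "g \<in> {g. g \<subseteq> A \<and> conn ad g e}"
    have "(\<Sum>Y\<in>Pow (A - nbh ad A g). \<Phi> (g \<union> Y)) = (\<Sum>Y\<in>Pow (A - nbh ad A g). \<Phi> g * \<Phi> Y)"
      by (rule sum.cong[OF refl]) (use g in \<open>auto intro: mult\<close>)
    thus "(\<Sum>Y\<in>Pow (A - nbh ad A g). \<Phi> (g \<union> Y)) = \<Phi> g * Zs \<Phi> (A - nbh ad A g)"
      by (simp add: Zs_def sum_distrib_left)
  qed
  finally show ?thesis .
qed


lemma dobrushin:
  fixes \<Phi> :: "'e set \<Rightarrow> complex"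
  assumes E0: "finite E0" and rf: "\<forall>x\<in>E0. ad x x"
    and mult: "\<And>A e g Y. A \<subseteq> E0 \<Longrightarrow> e \<in> A \<Longrightarrow> g \<subseteq> A \<Longrightarrow> conn ad g e \<Longrightarrow> Y \<subseteq> A - nbh ad A g
                 \<Longrightarrow> \<Phi> (g \<union> Y) = \<Phi> g * \<Phi> Y"
    and P0: "\<Phi> {} = 1" and q: "0 < q" "q < 1"
    and key: "\<And>A e. A \<subseteq> E0 \<Longrightarrow> e \<in> A \<Longrightarrow>
        (\<Sum>g\<in>{g. g \<subseteq> A \<and> conn ad g e}. cmod (\<Phi> g) / (1-q)^(card (nbh ad A g) - 1)) \<le> q"
  shows "A \<subseteq> E0 \<Longrightarrow> Zs \<Phi> A \<noteq> 0 \<and> (\<forall>e\<in>A. (1-q) * cmod (Zs \<Phi> (A - {e})) \<le> cmod (Zs \<Phi> A))"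
proof (induction "card A" arbitrary: A rule: less_induct)
  case less
  have fA: "finite A" using less.prems E0 finite_subset by blast
  have IH: "Zs \<Phi> B \<noteq> 0 \<and> (\<forall>e\<in>B. (1-q) * cmod (Zs \<Phi> (B - {e})) \<le> cmod (Zs \<Phi> B))"
    if "B \<subset> A" for B
  proof -
    have "card B < card A" using that fA psubset_card_mono by blast
    moreover have "B \<subseteq> E0" using that less.prems by blast
    ultimately show ?thesis using less.hyps by blast
  qed
  have q1: "0 < 1 - q" using q by simp
  have ratio: "(1-q) * cmod (Zs \<Phi> (A - {e})) \<le> cmod (Zs \<Phi> A)" if e: "e \<in> A" for e
  proof -
    define A' where "A' = A - {e}"
    have tele: "(1-q)^card D * cmod (Zs \<Phi> (A' - D)) \<le> cmod (Zs \<Phi> A')" if "D \<subseteq> A'" for D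
    proof -
      have fD: "finite D" using that fA finite_subset unfolding A'_def by blast
      from fD that show ?thesis
      proof (induction D rule: finite_induct)
        case empty then show ?case by simp
      next
        case (insert f D)
        have sub: "A' - D \<subset> A" using e unfolding A'_def by blast
        have f: "f \<in> A' - D" using insert by auto
        have h1: "(1-q) * cmod (Zs \<Phi> ((A' - D) - {f})) \<le> cmod (Zs \<Phi> (A' - D))"
          using IH[OF sub] f by blast
        have h2: "A' - insert f D = (A' - D) - {f}" by blast
        have h3: "(1-q)^card D * cmod (Zs \<Phi> (A' - D)) \<le> cmod (Zs \<Phi> A')" using insert by blast
        have "(1-q)^card (insert f D) * cmod (Zs \<Phi> (A' - insert f D))
              = (1-q)^card D * ((1-q) * cmod (Zs \<Phi> ((A' - D) - {f})))"
          using insert(1,2) h2 by simp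
        also have "\<dots> \<le> (1-q)^card D * cmod (Zs \<Phi> (A' - D))"
          by (rule mult_left_mono[OF h1]) (use q1 in simp)
        also have "\<dots> \<le> cmod (Zs \<Phi> A')" by (rule h3)
        finally show ?case .
      qed
    qed
    have sA': "A' \<subset> A" using e unfolding A'_def by blast
    have Z': "Zs \<Phi> A' \<noteq> 0" using IH[OF sA'] by blast
    let ?G = "{g. g \<subseteq> A \<and> conn ad g e}"
    have fG: "finite ?G" by (rule finite_subset[of _ "Pow A"]) (use fA in auto)
    have rec: "Zs \<Phi> A = Zs \<Phi> A' + (\<Sum>g\<in>?G. \<Phi> g * Zs \<Phi> (A - nbh ad A g))"
      unfolding A'_def
      by (rule Zs_rec[OF fA e]) (use less.prems rf in \<open>auto intro: mult[OF less.prems e]\<close>)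
    have trm: "cmod (\<Phi> g * Zs \<Phi> (A - nbh ad A g)) \<le> cmod (\<Phi> g) / (1-q)^(card (nbh ad A g) - 1) * cmod (Zs \<Phi> A')"
      if g: "g \<in> ?G" for g
    proof -
      define D where "D = nbh ad A g - {e}"
      have eg: "e \<in> g" using g by (auto simp: conn_def)
      have en: "e \<in> nbh ad A g" using eg e rf less.prems by (auto simp: nbh_def)
      have fn: "finite (nbh ad A g)" using fA by (auto simp: nbh_def)
      have DA: "D \<subseteq> A'" unfolding D_def A'_def nbh_def by auto
      have cD: "card D = card (nbh ad A g) - 1" unfolding D_def using en fn by simp
      have eqs: "A - nbh ad A g = A' - D" unfolding D_def A'_def using en by blast
      have t: "(1-q)^(card (nbh ad A g) - 1) * cmod (Zs \<Phi> (A - nbh ad A g)) \<le> cmod (Zs \<Phi> A')"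
        using tele[OF DA] cD eqs by simp
      have pos: "0 < (1-q)^(card (nbh ad A g) - 1)" using q1 by simp
      have "cmod (Zs \<Phi> (A - nbh ad A g)) \<le> cmod (Zs \<Phi> A') / (1-q)^(card (nbh ad A g) - 1)"
        using t pos by (simp add: field_simps)
      hence "cmod (\<Phi> g) * cmod (Zs \<Phi> (A - nbh ad A g)) \<le> cmod (\<Phi> g) * (cmod (Zs \<Phi> A') / (1-q)^(card (nbh ad A g) - 1))"
        by (rule mult_left_mono) simp
      thus ?thesis by (simp add: norm_mult)
    qed
    have "cmod (\<Sum>g\<in>?G. \<Phi> g * Zs \<Phi> (A - nbh ad A g)) \<le> (\<Sum>g\<in>?G. cmod (\<Phi> g * Zs \<Phi> (A - nbh ad A g)))"
      by (rule norm_sum)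
    also have "\<dots> \<le> (\<Sum>g\<in>?G. cmod (\<Phi> g) / (1-q)^(card (nbh ad A g) - 1) * cmod (Zs \<Phi> A'))"
      by (rule sum_mono) (rule trm)
    also have "\<dots> = (\<Sum>g\<in>?G. cmod (\<Phi> g) / (1-q)^(card (nbh ad A g) - 1)) * cmod (Zs \<Phi> A')"
      by (simp add: sum_distrib_right)
    also have "\<dots> \<le> q * cmod (Zs \<Phi> A')"
      by (rule mult_right_mono[OF key[OF less.prems e]]) simp
    finally have S: "cmod (\<Sum>g\<in>?G. \<Phi> g * Zs \<Phi> (A - nbh ad A g)) \<le> q * cmod (Zs \<Phi> A')" .
    have "cmod (Zs \<Phi> A') - cmod (\<Sum>g\<in>?G. \<Phi> g * Zs \<Phi> (A - nbh ad A g)) \<le> cmod (Zs \<Phi> A)"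
      using rec norm_triangle_ineq4[of "Zs \<Phi> A" "\<Sum>g\<in>?G. \<Phi> g * Zs \<Phi> (A - nbh ad A g)"]
      by (metis add_diff_cancel norm_diff_ineq diff_le_eq add.commute)
    thus ?thesis using S unfolding A'_def by (simp add: algebra_simps)
  qed
  have nz: "Zs \<Phi> A \<noteq> 0"
  proof (cases "A = {}")
    case True then show ?thesis by (simp add: Zs_def P0)
  next
    case False
    then obtain e where e: "e \<in> A" by blast
    have "Zs \<Phi> (A - {e}) \<noteq> 0" using IH[of "A - {e}"] e by blast
    hence "0 < (1-q) * cmod (Zs \<Phi> (A - {e}))" using q1 by simp
    thus ?thesis using ratio[OF e] by auto
  qed
  show ?case using nz ratio by blast
qed

lemma Zs_pow:
  fixes x :: real
  assumes "finite A" shows "Zs (\<lambda>X. x ^ card X) A = (1 + x)^card A"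
  using assms
proof (induction A rule: finite_induct)
  case empty then show ?case by (simp add: Zs_def)
next
  case (insert a A)
  have inj: "inj_on (insert a) (Pow A)" using insert(2) by (auto simp: inj_on_def)
  have dis: "Pow A \<inter> insert a ` Pow A = {}" using insert(2) by auto
  have fP: "finite (Pow A)" using insert(1) by simp
  have "Zs (\<lambda>X. x ^ card X) (insert a A) = (\<Sum>X\<in>Pow A. x ^ card X) + (\<Sum>X\<in>insert a ` Pow A. x ^ card X)"
    unfolding Zs_def Pow_insert by (rule sum.union_disjoint) (use fP dis in auto)
  also have "(\<Sum>X\<in>insert a ` Pow A. x ^ card X) = (\<Sum>X\<in>Pow A. x ^ card (insert a X))"
    by (rule sum.reindex[OF inj, unfolded comp_def])
  also have "\<dots> = (\<Sum>X\<in>Pow A. x * x ^ card X)"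
  proof (rule sum.cong[OF refl])
    fix X assume "X \<in> Pow A"
    hence "finite X" "a \<notin> X" using insert(1,2) finite_subset by auto
    thus "x ^ card (insert a X) = x * x ^ card X" by simp
  qed
  finally show ?case using insert by (simp add: Zs_def sum_distrib_left[symmetric] algebra_simps)
qed

lemma count_term:
  fixes p :: real
  assumes "0 < p" "p < 1" "k \<le> n" "n \<le> N"
  shows "(p/(1-p))^k * (1 + p/(1-p))^(N-n) * (1-p)^N = p^k * (1-p)^(n-k)"
proof -
  have p1: "1 - p \<noteq> 0" using assms by simp
  have N: "N = (N-n) + (n-k) + k" using assms by simp
  have a: "1 + p/(1-p) = 1/(1-p)" using p1 by (simp add: field_simps)
  have "(1-p)^N = (1-p)^(N-n) * (1-p)^(n-k) * (1-p)^k" by (subst N) (simp add: power_add)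
  thus ?thesis unfolding a using p1 by (simp add: power_divide field_simps)
qed

lemma count_ident:
  fixes p :: real
  assumes A: "finite A" "e \<in> A" and rf: "\<forall>x\<in>A. ad x x" and p: "0 < p" "p < 1"
  shows "(\<Sum>g\<in>{g. g \<subseteq> A \<and> conn ad g e}. p^card g * (1-p)^(card (nbh ad A g) - card g)) = p"
proof -
  define x where "x = p/(1-p)"
  let ?G = "{g. g \<subseteq> A \<and> conn ad g e}"
  have mult: "x ^ card (g \<union> Y) = x ^ card g * x ^ card Y"
    if "g \<subseteq> A" "conn ad g e" "Y \<subseteq> A - nbh ad A g" for g Y
  proof -
    have "g \<subseteq> nbh ad A g" using that(1) rf by (auto simp: nbh_def)
    hence "g \<inter> Y = {}" using that(3) by blast
    moreover have "finite g" using that(1) A(1) finite_subset by blast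
    moreover have "finite Y" using that(3) A(1) by (meson Diff_subset finite_subset subset_trans)
    ultimately show ?thesis by (simp add: card_Un_disjoint power_add)
  qed
  have rec: "Zs (\<lambda>X. x ^ card X) A = Zs (\<lambda>X. x ^ card X) (A - {e}) +
      (\<Sum>g\<in>?G. x ^ card g * Zs (\<lambda>X. x ^ card X) (A - nbh ad A g))"
    by (rule Zs_rec[where ad=ad, OF A rf]) (rule mult)
  have fn: "\<And>g. finite (nbh ad A g)" using A(1) by (auto simp: nbh_def)
  have sn: "\<And>g. nbh ad A g \<subseteq> A" by (auto simp: nbh_def)
  have "(1+x)^card A = (1+x)^(card A - 1) + (\<Sum>g\<in>?G. x ^ card g * (1+x)^(card A - card (nbh ad A g)))"
    using rec A fn sn by (simp add: Zs_pow card_Diff_subset)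
  hence "(1+x)^card A * (1-p)^card A = (1+x)^(card A - 1) * (1-p)^card A
          + (\<Sum>g\<in>?G. x ^ card g * (1+x)^(card A - card (nbh ad A g)) * (1-p)^card A)"
    by (simp add: algebra_simps sum_distrib_left sum_distrib_right)
  also have "(\<Sum>g\<in>?G. x ^ card g * (1+x)^(card A - card (nbh ad A g)) * (1-p)^card A)
       = (\<Sum>g\<in>?G. p^card g * (1-p)^(card (nbh ad A g) - card g))"
  proof (rule sum.cong[OF refl])
    fix g assume g: "g \<in> ?G"
    have "g \<subseteq> nbh ad A g" using g rf by (auto simp: nbh_def)
    hence "card g \<le> card (nbh ad A g)" using fn card_mono by blast
    moreover have "card (nbh ad A g) \<le> card A" using A(1) sn card_mono by blast
    ultimately show "x ^ card g * (1+x)^(card A - card (nbh ad A g)) * (1-p)^card A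
       = p^card g * (1-p)^(card (nbh ad A g) - card g)"
      unfolding x_def by (rule count_term[OF p])
  qed
  also have "(1+x)^(card A - 1) * (1-p)^card A = 1 - p"
  proof -
    have "A \<noteq> {}" using A(2) by blast
    hence "1 \<le> card A" using A(1) by (simp add: card_gt_0_iff Suc_le_eq)
    thus ?thesis using count_term[OF p, of 0 1 "card A"] unfolding x_def by simp
  qed
  also have "(1+x)^card A * (1-p)^card A = 1"
    using count_term[OF p, of 0 0 "card A"] unfolding x_def by simp
  finally show ?thesis by simp
qed


lemma exp_ge_quad_pow:
  fixes x :: real assumes "0 \<le> x" and "n > 0"
  shows "(1 + x/n + (x/n)^2/2)^n \<le> exp x"
proof -
  have "exp x = exp (x/n)^n" using assms(2) by (simp flip: exp_of_nat_mult)
  moreover have "1 + x/n + (x/n)^2/2 \<le> exp (x/n)"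
    by (rule exp_lower_Taylor_quadratic) (use assms in simp)
  moreover have "0 \<le> 1 + x/n + (x/n)^2/2" using assms by simp
  ultimately show ?thesis by (simp add: power_mono)
qed

lemma num1: "(101/100::real) \<le> 34/100 * exp (11/10)"
proof -
  have "(1 + (11/10)/8 + ((11/10)/8)^2/2)^8 \<le> exp (11/10::real)"
    using exp_ge_quad_pow[of "11/10" 8] by simp
  moreover have "(101/100::real) \<le> 34/100 * (1 + (11/10)/8 + ((11/10)/8)^2/2)^8" by (simp add: power_divide)
  ultimately show ?thesis by linarith
qed

lemma num2: "(101/100::real) \<le> 22/100 * exp (31/20)"
proof -
  have "(1 + (31/20)/8 + ((31/20)/8)^2/2)^8 \<le> exp (31/20::real)"
    using exp_ge_quad_pow[of "31/20" 8] by simp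
  moreover have "(101/100::real) \<le> 22/100 * (1 + (31/20)/8 + ((31/20)/8)^2/2)^8" by (simp add: power_divide)
  ultimately show ?thesis by linarith
qed

lemma key_real:
  fixes r1 D \<beta> :: real and k :: nat
  assumes r1: "1 \<le> r1" and D: "0 < D" and k: "1 \<le> k" and b0: "0 \<le> \<beta>"
    and bb: "\<beta> * (D * exp 2 * r1 * (r1+1)) \<le> 101/100"
  shows "r1^(k+1) * \<beta>^k \<le> (34/100/D) * (11/100/D)^(k-1) * (exp(-11/100) * exp(-34/100))^(k+1)"
proof -
  define E where "E = exp (-45/100::real)"
  have EE: "exp(-11/100) * exp(-34/100) = E" unfolding E_def by (simp flip: exp_add)
  define u where "u = r1 * (\<beta> * D)"
  have u0: "0 \<le> u" unfolding u_def using r1 b0 D by simp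
  have ub: "u * ((r1+1) * exp 2) \<le> 101/100" using bb unfolding u_def by (simp add: algebra_simps)
  have e2: "0 < exp (2::real)" by simp
  have i: "r1 * u \<le> 34/100 * E^2"
  proof -
    have "r1 * u * exp 2 \<le> 101/100"
    proof -
      have "r1 * u * exp 2 \<le> u * ((r1+1) * exp 2)" using r1 u0 e2
        by (simp add: algebra_simps mult_right_mono)
      thus ?thesis using ub by linarith
    qed
    also have "(101/100::real) \<le> 34/100 * exp (11/10)" by (rule num1)
    also have "exp (11/10::real) = E^2 * exp 2" unfolding E_def
      by (simp add: power2_eq_square flip: exp_add)
    finally have "r1 * u * exp 2 \<le> 34/100 * E^2 * exp 2" by (simp add: algebra_simps)
    thus ?thesis using e2 by simp
  qed
  have ii: "u \<le> 11/100 * E"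
  proof -
    have "u * (2 * exp 2) \<le> u * ((r1+1) * exp 2)" using r1 u0 e2
      by (intro mult_left_mono) auto
    hence "u * (2 * exp 2) \<le> 101/100" using ub by linarith
    also have "(101/100::real) \<le> 22/100 * exp (31/20)" by (rule num2)
    also have "exp (31/20::real) = E * exp 2" unfolding E_def by (simp flip: exp_add)
    finally have "u * (2 * exp 2) \<le> (11/100 * E) * (2 * exp 2)" by (simp add: algebra_simps)
    thus ?thesis using e2 by simp
  qed
  obtain j where j: "k = Suc j" using k by (cases k) auto
  have lhs: "r1^(k+1) * \<beta>^k = (r1 * u) * u^j / D^k"
    unfolding u_def j using D by (simp add: power_mult_distrib field_simps)
  have rhs: "(34/100/D) * (11/100/D)^(k-1) * E^(k+1) = (34/100 * E^2) * (11/100 * E)^j / D^k"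
    unfolding j using D by (simp add: power_mult_distrib power_divide field_simps power2_eq_square)
  have "(r1 * u) * u^j \<le> (34/100 * E^2) * (11/100 * E)^j"
    by (rule mult_mono[OF i power_mono[OF ii u0]]) (use u0 r1 in auto)
  hence "(r1 * u) * u^j / D^k \<le> (34/100 * E^2) * (11/100 * E)^j / D^k"
    using D by (intro divide_right_mono) auto
  thus ?thesis unfolding EE lhs rhs .
qed

lemma one_minus_pow_ge:
  fixes x :: real and D :: nat
  assumes "0 \<le> x" "x < 1" "1 \<le> D"
  shows "exp (-x) \<le> (1 - x/D)^(D-1)"
proof -
  define y where "y = x / D"
  have y0: "0 \<le> y" "y < 1" unfolding y_def using assms by (auto simp: field_simps)
  have "1/(1-y) = 1 + y/(1-y)" using y0 by (simp add: field_simps)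
  also have "\<dots> \<le> exp (y/(1-y))" by (rule exp_ge_add_one_self)
  finally have "exp (-(y/(1-y))) \<le> 1 - y" using y0
    by (simp add: exp_minus field_simps)
  hence "exp (-(y/(1-y)))^(D-1) \<le> (1-y)^(D-1)" by (rule power_mono) simp
  hence a: "exp (-(real (D-1) * (y/(1-y)))) \<le> (1-y)^(D-1)"
    by (simp add: exp_of_nat_mult[symmetric])
  have "real (D-1) * (y/(1-y)) \<le> x"
  proof -
    have Dp: "real D > 0" using assms by simp
    have "real (D-1) = real D - 1" using assms by simp
    moreover have "y/(1-y) = x / (real D - x)" unfolding y_def using Dp assms
      by (simp add: field_simps)
    moreover have "(real D - 1) * (x / (real D - x)) \<le> x"
    proof -
      have xx: "x * x \<le> x" using assms by (simp add: mult_left_le_one_le)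
      have "real D - x > 0" using assms by simp
      thus ?thesis using xx by (simp add: field_simps)
    qed
    ultimately show ?thesis by simp
  qed
  hence "exp (-x) \<le> exp (-(real (D-1) * (y/(1-y))))" by simp
  with a show ?thesis unfolding y_def by linarith
qed


definition ead :: "('e \<Rightarrow> 'v set) \<Rightarrow> 'e \<Rightarrow> 'e \<Rightarrow> bool" where
  "ead ends f h \<longleftrightarrow> ends f \<inter> ends h \<noteq> {}"

definition VV :: "('e \<Rightarrow> 'v set) \<Rightarrow> 'e set \<Rightarrow> 'v set" where
  "VV ends X = \<Union>(ends ` X)"

lemma vcount:
  assumes fin: "finite g" and c: "conn (ead ends) g e" and two: "\<forall>f\<in>g. card (ends f) = 2"
  shows "card (VV ends g) \<le> card g + 1"
proof -
  have eg: "e \<in> g" using c by (simp add: conn_def)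
  have finends: "\<And>f. f \<in> g \<Longrightarrow> finite (ends f)" using two by (metis card.infinite zero_neq_numeral)
  have finVV: "\<And>S. S \<subseteq> g \<Longrightarrow> finite S \<Longrightarrow> finite (VV ends S)" unfolding VV_def using finends by blast
  have claim: "1 \<le> m \<Longrightarrow> m \<le> card g \<Longrightarrow> (\<exists>S. S \<subseteq> g \<and> e \<in> S \<and> card S = m \<and> card (VV ends S) \<le> m + 1)" for m
  proof (induction m)
    case 0 then show ?case by simp
  next
    case (Suc m)
    show ?case
    proof (cases "m = 0")
      case True
      have "card (VV ends {e}) = 2" using two eg by (simp add: VV_def)
      then show ?thesis using True eg by (intro exI[of _ "{e}"]) auto
    next
      case False
      have m1: "1 \<le> m" "m \<le> card g" using False Suc.prems by auto
      then obtain S where S: "S \<subseteq> g" "e \<in> S" "card S = m" "card (VV ends S) \<le> m + 1"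
        using Suc.IH[OF m1] by blast
      have fS: "finite S" using S(1) fin finite_subset by blast
      have "\<exists>f\<in>g - S. \<exists>h\<in>S. ead ends h f"
      proof (rule ccontr)
        assume no: "\<not> ?thesis"
        have "ccomp (ead ends) g e \<subseteq> S"
        proof
          fix f assume "f \<in> ccomp (ead ends) g e"
          hence "(e,f) \<in> (crel (ead ends) g)\<^sup>*" by (simp add: ccomp_def)
          thus "f \<in> S"
          proof (induct rule: rtrancl_induct)
            case base then show ?case using S by simp
          next
            case (step h f) then show ?case using no by (auto simp: crel_def)
          qed
        qed
        hence "g = S" using c S(1) by (auto simp: conn_def)
        thus False using S(3) Suc.prems by simp
      qed
      then obtain f h where f: "f \<in> g" "f \<notin> S" and h: "h \<in> S" "ead ends h f" by blast
      have VVi: "VV ends (insert f S) = VV ends S \<union> ends f" by (auto simp: VV_def)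
      have ov: "ends f \<inter> VV ends S \<noteq> {}" using h by (auto simp: VV_def ead_def)
      have cf: "card (ends f) = 2" "finite (ends f)" using two f finends by auto
      have "card (ends f \<inter> VV ends S) \<ge> 1"
        using ov cf(2) by (simp add: Suc_le_eq card_gt_0_iff)
      hence "card (ends f - VV ends S) \<le> 1"
        using cf card_Diff_subset_Int[of "ends f" "VV ends S"] by (simp add: Int_commute)
      moreover have "card (VV ends S \<union> ends f) \<le> card (VV ends S) + card (ends f - VV ends S)"
      proof -
        have "VV ends S \<union> ends f = VV ends S \<union> (ends f - VV ends S)" by blast
        thus ?thesis by (metis card_Un_le)
      qed
      ultimately have "card (VV ends (insert f S)) \<le> Suc m + 1" using S(4) VVi by simp
      moreover have "card (insert f S) = Suc m" using fS f S(3) by simp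
      moreover have "insert f S \<subseteq> g" "e \<in> insert f S" using S f by auto
      ultimately show ?thesis by blast
    qed
  qed
  have "card g \<noteq> 0" using eg fin by auto
  hence c1: "1 \<le> card g" by simp
  obtain S where S: "S \<subseteq> g" "card S = card g" "card (VV ends S) \<le> card g + 1"
    using claim[OF c1 order_refl] by blast
  have "S = g" using S fin by (simp add: card_subset_eq)
  thus ?thesis using S by simp
qed

lemma dcount:
  assumes fE: "finite E" and gA: "g \<subseteq> A" "A \<subseteq> E" and two: "\<forall>f\<in>E. card (ends f) = 2"
    and deg: "\<forall>v\<in>VV ends g. card {f\<in>E. v \<in> ends f} \<le> D"
  shows "card (nbh (ead ends) A g) + card g \<le> D * card (VV ends g)"
proof -
  let ?N = "nbh (ead ends) A g" and ?W = "VV ends g"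
  have finends: "\<And>f. f \<in> E \<Longrightarrow> finite (ends f)" using two by (metis card.infinite zero_neq_numeral)
  have fg: "finite g" using finite_subset[OF order_trans[OF gA] fE] .
  have fW: "finite ?W" unfolding VV_def using fg gA finends by (simp add: subset_iff)
  have fN: "finite ?N" by (rule finite_subset[OF _ fE]) (use gA in \<open>auto simp: nbh_def\<close>)
  have ne: "\<forall>f\<in>E. ends f \<noteq> {}" using two by (metis card.empty zero_neq_numeral)
  have gN: "g \<subseteq> ?N"
  proof
    fix f assume "f \<in> g"
    hence "f \<in> A" "ends f \<noteq> {}" using gA ne by auto
    thus "f \<in> ?N" using \<open>f \<in> g\<close> unfolding nbh_def ead_def by auto
  qed
  have NE: "?N \<subseteq> E" using gA by (auto simp: nbh_def)
  have "(\<Sum>v\<in>?W. card {f\<in>E. v \<in> ends f}) = (\<Sum>v\<in>?W. \<Sum>f\<in>E. if v \<in> ends f then 1 else 0)"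
    using fE by (simp add: sum.inter_filter[symmetric])
  also have "\<dots> = (\<Sum>f\<in>E. \<Sum>v\<in>?W. if v \<in> ends f then 1 else 0)" by (rule sum.swap)
  also have "\<dots> = (\<Sum>f\<in>E. card (ends f \<inter> ?W))"
  proof (rule sum.cong[OF refl])
    fix f assume "f \<in> E"
    have "ends f \<inter> ?W = {v\<in>?W. v \<in> ends f}" by blast
    thus "(\<Sum>v\<in>?W. if v \<in> ends f then 1 else 0) = card (ends f \<inter> ?W)"
      using fW by (simp add: sum.inter_filter[symmetric])
  qed
  finally have eq: "(\<Sum>v\<in>?W. card {f\<in>E. v \<in> ends f}) = (\<Sum>f\<in>E. card (ends f \<inter> ?W))" .
  have "(\<Sum>f\<in>?N. card (ends f \<inter> ?W)) \<le> (\<Sum>f\<in>E. card (ends f \<inter> ?W))"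
    using NE fE by (intro sum_mono2) auto
  moreover have "(\<Sum>f\<in>?N. card (ends f \<inter> ?W)) = (\<Sum>f\<in>g. card (ends f \<inter> ?W)) + (\<Sum>f\<in>?N - g. card (ends f \<inter> ?W))"
    using fN gN by (metis sum.subset_diff add.commute)
  moreover have "(\<Sum>f\<in>g. card (ends f \<inter> ?W)) = (\<Sum>f\<in>g. 2)"
  proof (rule sum.cong[OF refl])
    fix f assume "f \<in> g"
    hence "ends f \<inter> ?W = ends f" "card (ends f) = 2" using gA two by (auto simp: VV_def)
    thus "card (ends f \<inter> ?W) = 2" by simp
  qed
  moreover have "(\<Sum>f\<in>?N - g. 1) \<le> (\<Sum>f\<in>?N - g. card (ends f \<inter> ?W))"
  proof (rule sum_mono)
    fix f assume f: "f \<in> ?N - g"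
    then obtain h where "h \<in> g" "ends h \<inter> ends f \<noteq> {}" by (auto simp: nbh_def ead_def)
    hence "ends f \<inter> ?W \<noteq> {}" by (auto simp: VV_def)
    moreover have "finite (ends f)" using f NE finends by blast
    ultimately show "1 \<le> card (ends f \<inter> ?W)" by (simp add: Suc_le_eq card_gt_0_iff)
  qed
  moreover have "card ?N = card g + card (?N - g)" using fN gN by (metis card_Diff_subset fg card_mono le_add_diff_inverse)
  ultimately have "card ?N + card g \<le> (\<Sum>v\<in>?W. card {f\<in>E. v \<in> ends f})" using eq by simp
  also have "\<dots> \<le> (\<Sum>v\<in>?W. D)" by (rule sum_mono) (use deg in blast)
  also have "\<dots> = D * card ?W" by simp
  finally show ?thesis .
qed


locale setting =
  fixes \<kappa> :: nat and V :: "'v set" and ends :: "'e \<Rightarrow> 'v set" and es :: "'e list"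
    and \<pi> :: "'v \<Rightarrow> sig" and z :: "nat \<Rightarrow> complex" and F :: "sig set"
  assumes fF: "finite F" and F0: "\<forall>f\<in>F. in_F0 f" and G: "is_graph V ends es"
    and piF: "\<forall>v\<in>V. \<pi> v \<in> F \<and> fst (\<pi> v) = length (inc_edges ends es v)"
    and z0: "z 0 \<noteq> 0"
begin

abbreviation "E \<equiv> set es"
definition "inc v = inc_edges ends es v"
definition gv :: "'v \<Rightarrow> nat list \<Rightarrow> complex" where "gv v xs = snd (\<pi> v) xs / zero_val (\<pi> v)"
definition wt :: "complex \<Rightarrow> nat \<Rightarrow> complex" where "wt t i = (if i = 0 then 1 else t * (z i / z 0))"
definition weight :: "complex \<Rightarrow> ('e \<Rightarrow> nat) \<Rightarrow> complex" where
  "weight t \<sigma> = (\<Prod>v\<in>V. gv v (map \<sigma> (inc v))) * (\<Prod>e\<in>E. wt t (\<sigma> e))"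
definition Pset :: "'e set \<Rightarrow> ('e \<Rightarrow> nat) set" where
  "Pset X = PiE E (\<lambda>e. if e \<in> X then {1..\<kappa>} else {0})"
definition Phi :: "complex \<Rightarrow> 'e set \<Rightarrow> complex" where "Phi t X = (\<Sum>\<sigma>\<in>Pset X. weight t \<sigma>)"
definition "r1 = max 1 (ratio_rF \<kappa> F)"

lemma finV: "finite V" using G by (simp add: is_graph_def)
lemma dist: "distinct es" using G by (simp add: is_graph_def)
lemma endsV: "e \<in> E \<Longrightarrow> ends e \<subseteq> V" using G by (simp add: is_graph_def)
lemma two: "\<forall>e\<in>E. card (ends e) = 2" using G by (simp add: is_graph_def)
lemma ends_ne: "e \<in> E \<Longrightarrow> ends e \<noteq> {}" using two by force
lemma set_inc: "set (inc v) = {e\<in>E. v \<in> ends e}" by (auto simp: inc_def inc_edges_def)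

lemma zv_ne: "v \<in> V \<Longrightarrow> zero_val (\<pi> v) \<noteq> 0"
  using piF F0 by (auto simp: in_F0_def)

lemma map_zero:
  assumes "\<forall>e\<in>set xs. \<sigma> e = 0" shows "map \<sigma> xs = replicate (length xs) 0"
  using assms by (induct xs) auto

lemma gv_zero: "v \<in> V \<Longrightarrow> gv v (replicate (length (inc v)) 0) = 1"
  using zv_ne[of v] piF by (auto simp: gv_def zero_val_def inc_def)

lemma gv_zero': "v \<in> V \<Longrightarrow> \<forall>e\<in>set (inc v). \<sigma> e = 0 \<Longrightarrow> gv v (map \<sigma> (inc v)) = 1"
proof -
  assume "v \<in> V" "\<forall>e\<in>set (inc v). \<sigma> e = 0"
  thus ?thesis using gv_zero map_zero[of "inc v" \<sigma>] by simp
qed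

lemma r1_ge: "1 \<le> r1" by (simp add: r1_def)

lemma gv_bound:
  assumes v: "v \<in> V" and xs: "set xs \<subseteq> {0..\<kappa>}" "length xs = length (inc v)"
  shows "cmod (gv v xs) \<le> r1"
proof (cases "xs = replicate (length (inc v)) 0")
  case True then show ?thesis using gv_zero[OF v] r1_ge by simp
next
  case False
  have fv0: "\<pi> v \<in> F \<and> fst (\<pi> v) = length (inc_edges ends es v)" using piF v by blast
  have fv: "\<pi> v \<in> F" "fst (\<pi> v) = length (inc v)" using fv0 unfolding inc_def by simp_all
  have dom: "xs \<in> sig_dom \<kappa> (fst (\<pi> v)) - {replicate (fst (\<pi> v)) 0}"
    unfolding sig_dom_def using xs False fv(2) by simp
  have fin: "finite (sig_dom \<kappa> (fst (\<pi> v)))"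
  proof -
    have "sig_dom \<kappa> (fst (\<pi> v)) = {xs. set xs \<subseteq> {0..\<kappa>} \<and> length xs = fst (\<pi> v)}"
      unfolding sig_dom_def by (rule Collect_cong) blast
    thus ?thesis using finite_lists_length_eq[of "{0..\<kappa>}" "fst (\<pi> v)"] by simp
  qed
  let ?f = "\<lambda>x. cmod (snd (\<pi> v) x) / cmod (zero_val (\<pi> v))"
  have "?f xs \<le> Max (insert 0 (?f ` (sig_dom \<kappa> (fst (\<pi> v)) - {replicate (fst (\<pi> v)) 0})))"
  proof (rule Max_ge)
    show "finite (insert 0 (?f ` (sig_dom \<kappa> (fst (\<pi> v)) - {replicate (fst (\<pi> v)) 0})))"
      using fin by simp
    show "?f xs \<in> insert 0 (?f ` (sig_dom \<kappa> (fst (\<pi> v)) - {replicate (fst (\<pi> v)) 0}))"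
      by (rule insertI2, rule imageI, rule dom)
  qed
  also have "\<dots> = ratio_r \<kappa> (\<pi> v)" unfolding ratio_r_def ..
  also have "\<dots> \<le> Max (insert 0 (ratio_r \<kappa> ` F))"
  proof (rule Max_ge)
    show "finite (insert 0 (ratio_r \<kappa> ` F))" using fF by simp
    show "ratio_r \<kappa> (\<pi> v) \<in> insert 0 (ratio_r \<kappa> ` F)" by (rule insertI2, rule imageI, rule fv(1))
  qed
  also have "\<dots> = ratio_rF \<kappa> F" unfolding ratio_rF_def ..
  also have "\<dots> \<le> r1" by (simp add: r1_def)
  finally show ?thesis by (simp add: gv_def norm_divide)
qed

lemma Pset_val: "\<sigma> \<in> Pset X \<Longrightarrow> e \<in> E \<Longrightarrow> \<sigma> e \<in> (if e \<in> X then {1..\<kappa>} else {0})"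
  unfolding Pset_def by (rule PiE_mem)
lemma Pset_in: assumes "\<sigma> \<in> Pset X" "X \<subseteq> E" "e \<in> X" shows "\<sigma> e \<in> {1..\<kappa>}"
proof -
  have "e \<in> E" using assms(2,3) by blast
  hence "\<sigma> e \<in> (if e \<in> X then {1..\<kappa>} else {0})" by (rule Pset_val[OF assms(1)])
  thus ?thesis using assms(3) by simp
qed
lemma Pset_zero: assumes "\<sigma> \<in> Pset X" "e \<in> E" "e \<notin> X" shows "\<sigma> e = 0"
proof -
  have "\<sigma> e \<in> (if e \<in> X then {1..\<kappa>} else {0})" by (rule Pset_val[OF assms(1,2)])
  thus ?thesis using assms(3) by simp
qed
lemma Pset_out: "\<sigma> \<in> Pset X \<Longrightarrow> e \<notin> E \<Longrightarrow> \<sigma> e = undefined"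
  unfolding Pset_def by (rule PiE_arb)

lemma weight_mult:
  assumes g: "g \<subseteq> E" and Y: "Y \<subseteq> E" and sep: "\<forall>h\<in>g. \<forall>y\<in>Y. ends h \<inter> ends y = {}"
    and s1: "\<sigma>1 \<in> Pset g" and s2: "\<sigma>2 \<in> Pset Y"
  shows "weight t (\<lambda>e. if e \<in> g then \<sigma>1 e else \<sigma>2 e) = weight t \<sigma>1 * weight t \<sigma>2"
proof -
  let ?m = "\<lambda>e. if e \<in> g then \<sigma>1 e else \<sigma>2 e"
  have gY: "g \<inter> Y = {}"
  proof (rule equals0I)
    fix e assume e: "e \<in> g \<inter> Y"
    hence "ends e \<inter> ends e = {}" using sep by blast
    moreover have "ends e \<noteq> {}" using e g ends_ne by blast
    ultimately show False by simp
  qed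
  have z1: "\<And>e. e \<in> E \<Longrightarrow> e \<notin> g \<Longrightarrow> \<sigma>1 e = 0" using s1 Pset_zero by blast
  have z2: "\<And>e. e \<in> E \<Longrightarrow> e \<notin> Y \<Longrightarrow> \<sigma>2 e = 0" using s2 Pset_zero by blast
  have vert: "gv v (map ?m (inc v)) = gv v (map \<sigma>1 (inc v)) * gv v (map \<sigma>2 (inc v))" if v: "v \<in> V" for v
  proof (cases "\<exists>h\<in>set (inc v). h \<in> g")
    case True
    then obtain h where h: "h \<in> set (inc v)" "h \<in> g" by blast
    have noY: "\<forall>e\<in>set (inc v). e \<notin> Y"
    proof
      fix e assume e: "e \<in> set (inc v)"
      have "v \<in> ends h" "v \<in> ends e" using h e by (auto simp: set_inc)
      thus "e \<notin> Y" using sep h(2) by blast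
    qed
    have a: "\<forall>e\<in>set (inc v). \<sigma>2 e = 0" using noY z2 by (auto simp: set_inc)
    have b: "map ?m (inc v) = map \<sigma>1 (inc v)"
      by (rule map_cong[OF refl]) (use noY z1 z2 in \<open>auto simp: set_inc\<close>)
    show ?thesis unfolding b using gv_zero'[OF v a] by simp
  next
    case False
    have a: "\<forall>e\<in>set (inc v). \<sigma>1 e = 0" using False z1 by (auto simp: set_inc)
    have b: "map ?m (inc v) = map \<sigma>2 (inc v)"
      by (rule map_cong[OF refl]) (use False in auto)
    show ?thesis unfolding b using gv_zero'[OF v a] by simp
  qed
  have edge: "wt t (?m e) = wt t (\<sigma>1 e) * wt t (\<sigma>2 e)" if e: "e \<in> E" for e
  proof (cases "e \<in> g")
    case True
    hence "e \<notin> Y" using gY by blast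
    then show ?thesis using True z2[OF e] by (simp add: wt_def)
  next
    case False then show ?thesis using z1[OF e] by (simp add: wt_def)
  qed
  have pv: "(\<Prod>v\<in>V. gv v (map ?m (inc v))) = (\<Prod>v\<in>V. gv v (map \<sigma>1 (inc v))) * (\<Prod>v\<in>V. gv v (map \<sigma>2 (inc v)))"
    by (subst prod.distrib[symmetric]) (rule prod.cong[OF refl vert])
  have pe: "(\<Prod>e\<in>E. wt t (?m e)) = (\<Prod>e\<in>E. wt t (\<sigma>1 e)) * (\<Prod>e\<in>E. wt t (\<sigma>2 e))"
    by (subst prod.distrib[symmetric]) (rule prod.cong[OF refl edge])
  show ?thesis unfolding weight_def pv pe by (simp only: mult_ac)
qed

definition mrg :: "'e set \<Rightarrow> ('e \<Rightarrow> nat) \<times> ('e \<Rightarrow> nat) \<Rightarrow> 'e \<Rightarrow> nat" where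
  "mrg g p = (\<lambda>e. if e \<in> g then fst p e else snd p e)"
definition spl :: "'e set \<Rightarrow> ('e \<Rightarrow> nat) \<Rightarrow> ('e \<Rightarrow> nat) \<times> ('e \<Rightarrow> nat)" where
  "spl g \<sigma> = (restrict (\<lambda>e. if e \<in> g then \<sigma> e else 0) E, restrict (\<lambda>e. if e \<in> g then 0 else \<sigma> e) E)"

lemma Phi_mult:
  assumes g: "g \<subseteq> E" and Y: "Y \<subseteq> E" and sep: "\<forall>h\<in>g. \<forall>y\<in>Y. ends h \<inter> ends y = {}"
  shows "Phi t (g \<union> Y) = Phi t g * Phi t Y"
proof -
  have gY: "g \<inter> Y = {}"
  proof (rule equals0I)
    fix e assume e: "e \<in> g \<inter> Y"
    hence "ends e \<inter> ends e = {}" using sep by blast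
    moreover have "ends e \<noteq> {}" using e g ends_ne by blast
    ultimately show False by simp
  qed
  have gnY: "\<And>e. e \<in> g \<Longrightarrow> e \<notin> Y" using gY by blast
  have A1: "spl g (mrg g p) = p \<and> mrg g p \<in> Pset (g \<union> Y)" if p: "p \<in> Pset g \<times> Pset Y" for p
  proof -
    obtain s1 s2 where ps: "p = (s1, s2)" by (cases p)
    have s1: "s1 \<in> Pset g" and s2: "s2 \<in> Pset Y" using p ps by auto
    have e1: "\<And>e. e \<notin> E \<Longrightarrow> s1 e = undefined" and e2: "\<And>e. e \<notin> E \<Longrightarrow> s2 e = undefined"
      using s1 s2 Pset_out by auto
    have z1: "\<And>e. e \<in> E \<Longrightarrow> e \<notin> g \<Longrightarrow> s1 e = 0" using s1 Pset_zero by blast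
    have z2: "\<And>e. e \<in> E \<Longrightarrow> e \<notin> Y \<Longrightarrow> s2 e = 0" using s2 Pset_zero by blast
    have r1: "\<And>e. e \<in> g \<Longrightarrow> s1 e \<in> {1..\<kappa>}" using s1 g Pset_in by blast
    have r2: "\<And>e. e \<in> Y \<Longrightarrow> s2 e \<in> {1..\<kappa>}" using s2 Y Pset_in by blast
    have a: "restrict (\<lambda>e. if e \<in> g then mrg g p e else 0) E = s1"
    proof
      fix e show "restrict (\<lambda>e. if e \<in> g then mrg g p e else 0) E e = s1 e"
        using e1[of e] z1[of e] unfolding ps mrg_def by (cases "e \<in> E"; cases "e \<in> g") simp_all
    qed
    have b: "restrict (\<lambda>e. if e \<in> g then 0 else mrg g p e) E = s2"
    proof
      fix e show "restrict (\<lambda>e. if e \<in> g then 0 else mrg g p e) E e = s2 e"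
        using e2[of e] z2[of e] gnY[of e] unfolding ps mrg_def by (cases "e \<in> E"; cases "e \<in> g") simp_all
    qed
    have c: "mrg g p \<in> Pset (g \<union> Y)"
      unfolding Pset_def PiE_iff extensional_def mem_Collect_eq
    proof (intro conjI ballI allI impI)
      fix e assume e: "e \<in> E"
      show "mrg g p e \<in> (if e \<in> g \<union> Y then {1..\<kappa>} else {0})"
        using r1[of e] r2[of e] z2[OF e] unfolding ps mrg_def by (cases "e \<in> g"; cases "e \<in> Y") simp_all
    next
      fix e assume e: "e \<notin> E"
      hence "e \<notin> g" using g by blast
      thus "mrg g p e = undefined" using e2[OF e] unfolding ps mrg_def by simp
    qed
    show ?thesis unfolding spl_def using a b c ps by simp
  qed
  have A2: "mrg g (spl g \<sigma>) = \<sigma> \<and> spl g \<sigma> \<in> Pset g \<times> Pset Y" if s: "\<sigma> \<in> Pset (g \<union> Y)" for \<sigma>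
  proof -
    have e0: "\<And>e. e \<notin> E \<Longrightarrow> \<sigma> e = undefined" using s Pset_out by blast
    have zz: "\<And>e. e \<in> E \<Longrightarrow> e \<notin> g \<union> Y \<Longrightarrow> \<sigma> e = 0" using s Pset_zero by blast
    have gYE: "g \<union> Y \<subseteq> E" using g Y by blast
    have rr: "\<And>e. e \<in> g \<union> Y \<Longrightarrow> \<sigma> e \<in> {1..\<kappa>}" using s gYE Pset_in by blast
    have a: "mrg g (spl g \<sigma>) = \<sigma>"
    proof
      fix e show "mrg g (spl g \<sigma>) e = \<sigma> e"
        using e0[of e] g unfolding mrg_def spl_def by (cases "e \<in> E"; cases "e \<in> g") auto
    qed
    have m1: "restrict (\<lambda>e. if e \<in> g then \<sigma> e else 0) E \<in> Pset g"
      unfolding Pset_def PiE_iff extensional_def mem_Collect_eq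
    proof (intro conjI ballI allI impI)
      fix e assume e: "e \<in> E"
      show "restrict (\<lambda>e. if e \<in> g then \<sigma> e else 0) E e \<in> (if e \<in> g then {1..\<kappa>} else {0})"
        using e rr[of e] by (cases "e \<in> g") simp_all
    qed simp
    have m2: "restrict (\<lambda>e. if e \<in> g then 0 else \<sigma> e) E \<in> Pset Y"
      unfolding Pset_def PiE_iff extensional_def mem_Collect_eq
    proof (intro conjI ballI allI impI)
      fix e assume e: "e \<in> E"
      show "restrict (\<lambda>e. if e \<in> g then 0 else \<sigma> e) E e \<in> (if e \<in> Y then {1..\<kappa>} else {0})"
        using e rr[of e] zz[OF e] gnY[of e] by (cases "e \<in> g"; cases "e \<in> Y") simp_all
    qed simp
    show ?thesis using a m1 m2 unfolding spl_def by simp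
  qed
  have "Phi t g * Phi t Y = (\<Sum>p\<in>Pset g \<times> Pset Y. weight t (fst p) * weight t (snd p))"
    unfolding Phi_def sum_product sum.cartesian_product by (rule sum.cong[OF refl]) (simp add: split_beta)
  also have "\<dots> = (\<Sum>p\<in>Pset g \<times> Pset Y. weight t (mrg g p))"
  proof (rule sum.cong[OF refl])
    fix p assume "p \<in> Pset g \<times> Pset Y"
    hence "fst p \<in> Pset g" "snd p \<in> Pset Y" by (auto simp: mem_Times_iff)
    from weight_mult[OF g Y sep this] show "weight t (fst p) * weight t (snd p) = weight t (mrg g p)"
      unfolding mrg_def by simp
  qed
  also have "\<dots> = (\<Sum>\<sigma>\<in>Pset (g \<union> Y). weight t \<sigma>)"
    by (rule sum.reindex_bij_witness[where j = "mrg g" and i = "spl g"]) (use A1 A2 in blast)+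
  finally show ?thesis by (simp add: Phi_def)
qed

end


context setting begin

lemma Phi_empty: "Phi t {} = 1"
proof -
  have P: "Pset {} = {restrict (\<lambda>_. 0) E}"
    unfolding Pset_def by (subst PiE_eq_singleton) simp
  have a: "gv v (map (restrict (\<lambda>_. 0) E) (inc v)) = 1" if "v \<in> V" for v
  proof (rule gv_zero'[OF that])
    show "\<forall>e\<in>set (inc v). restrict (\<lambda>_. 0) E e = 0" unfolding set_inc by simp
  qed
  have b: "wt t (restrict (\<lambda>_. 0) E e) = 1" if "e \<in> E" for e using that by (simp add: wt_def)
  show ?thesis unfolding Phi_def P weight_def using a b by simp
qed

definition supp :: "('e \<Rightarrow> nat) \<Rightarrow> 'e set" where "supp \<sigma> = {e\<in>E. \<sigma> e \<noteq> 0}"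

lemma Pset_char:
  assumes X: "X \<subseteq> E"
  shows "{\<sigma>. \<sigma> \<in> PiE E (\<lambda>_. {0..\<kappa>}) \<and> supp \<sigma> = X} = Pset X"
proof (intro set_eqI iffI)
  fix \<sigma> assume "\<sigma> \<in> {\<sigma>. \<sigma> \<in> PiE E (\<lambda>_. {0..\<kappa>}) \<and> supp \<sigma> = X}"
  hence s: "\<sigma> \<in> PiE E (\<lambda>_. {0..\<kappa>})" and sp: "supp \<sigma> = X" by auto
  show "\<sigma> \<in> Pset X" unfolding Pset_def PiE_iff
  proof (intro conjI ballI)
    fix e assume e: "e \<in> E"
    have "\<sigma> e \<in> {0..\<kappa>}" using PiE_mem[OF s e] .
    moreover have "e \<in> X \<longleftrightarrow> \<sigma> e \<noteq> 0" using sp e unfolding supp_def by blast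
    ultimately show "\<sigma> e \<in> (if e \<in> X then {1..\<kappa>} else {0})" by auto
  next
    show "\<sigma> \<in> extensional E" using s by (simp add: PiE_iff)
  qed
next
  fix \<sigma> assume s: "\<sigma> \<in> Pset X"
  have a: "\<sigma> \<in> PiE E (\<lambda>_. {0..\<kappa>})" unfolding PiE_iff
  proof (intro conjI ballI)
    fix e assume e: "e \<in> E"
    show "\<sigma> e \<in> {0..\<kappa>}" using Pset_val[OF s e] by (cases "e \<in> X") auto
  next
    show "\<sigma> \<in> extensional E" using s unfolding Pset_def by (simp add: PiE_iff)
  qed
  have b: "supp \<sigma> = X"
  proof (intro set_eqI iffI)
    fix e assume "e \<in> supp \<sigma>"
    hence e: "e \<in> E" "\<sigma> e \<noteq> 0" unfolding supp_def by auto
    show "e \<in> X"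
    proof (rule ccontr)
      assume "e \<notin> X"
      hence "\<sigma> e = 0" using Pset_zero[OF s e(1)] by blast
      with e(2) show False by simp
    qed
  next
    fix e assume e: "e \<in> X"
    hence "e \<in> E" using X by blast
    moreover have "\<sigma> e \<in> {1..\<kappa>}" using Pset_in[OF s X e] .
    ultimately show "e \<in> supp \<sigma>" unfolding supp_def by auto
  qed
  show "\<sigma> \<in> {\<sigma>. \<sigma> \<in> PiE E (\<lambda>_. {0..\<kappa>}) \<and> supp \<sigma> = X}" using a b by blast
qed

lemma sum_weight: "(\<Sum>\<sigma>\<in>PiE E (\<lambda>_. {0..\<kappa>}). weight t \<sigma>) = Zs (Phi t) E"
proof -
  have fS: "finite (PiE E (\<lambda>_. {0..\<kappa>}))" by (rule finite_PiE) auto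
  have fT: "finite (Pow E)" by simp
  have ST: "supp ` PiE E (\<lambda>_. {0..\<kappa>}) \<subseteq> Pow E" unfolding supp_def by auto
  have "(\<Sum>\<sigma>\<in>PiE E (\<lambda>_. {0..\<kappa>}). weight t \<sigma>)
      = (\<Sum>X\<in>Pow E. \<Sum>\<sigma>\<in>{\<sigma>. \<sigma> \<in> PiE E (\<lambda>_. {0..\<kappa>}) \<and> supp \<sigma> = X}. weight t \<sigma>)"
    by (rule sum.group[OF fS fT ST, symmetric])
  also have "\<dots> = (\<Sum>X\<in>Pow E. Phi t X)"
    by (rule sum.cong[OF refl]) (simp add: Pset_char Phi_def)
  finally show ?thesis by (simp add: Zs_def)
qed

lemma Phi_bound:
  assumes X: "X \<subseteq> E"
  shows "cmod (Phi t X) \<le> r1 ^ card (VV ends X) * (\<Sum>i\<in>{1..\<kappa>}. cmod (wt t i)) ^ card X"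
proof -
  let ?b = "\<Sum>i\<in>{1..\<kappa>}. cmod (wt t i)"
  let ?m = "card (VV ends X)"
  have VVV: "VV ends X \<subseteq> V" unfolding VV_def using X endsV by blast
  have fVV: "finite (VV ends X)" using VVV finV finite_subset by blast
  have vb: "cmod (\<Prod>v\<in>V. gv v (map \<sigma> (inc v))) \<le> r1 ^ ?m" if s: "\<sigma> \<in> Pset X" for \<sigma>
  proof -
    have vals: "\<sigma> e \<in> {0..\<kappa>}" if e: "e \<in> E" for e
    proof -
      have "\<sigma> e \<in> (if e \<in> X then {1..\<kappa>} else {0})" by (rule Pset_val[OF s e])
      thus ?thesis by (cases "e \<in> X") auto
    qed
    have "cmod (\<Prod>v\<in>V. gv v (map \<sigma> (inc v))) = (\<Prod>v\<in>V. cmod (gv v (map \<sigma> (inc v))))"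
      by (simp add: prod_norm)
    also have "\<dots> = (\<Prod>v\<in>V \<inter> VV ends X. cmod (gv v (map \<sigma> (inc v)))) * (\<Prod>v\<in>V - VV ends X. cmod (gv v (map \<sigma> (inc v))))"
      by (rule prod.Int_Diff[OF finV])
    also have "(\<Prod>v\<in>V - VV ends X. cmod (gv v (map \<sigma> (inc v)))) = 1"
    proof (rule prod.neutral, rule ballI)
      fix v assume v: "v \<in> V - VV ends X"
      have "\<forall>e\<in>set (inc v). \<sigma> e = 0"
      proof
        fix e assume "e \<in> set (inc v)"
        hence e: "e \<in> E" "v \<in> ends e" unfolding set_inc by auto
        hence "e \<notin> X" using v unfolding VV_def by blast
        thus "\<sigma> e = 0" using Pset_zero[OF s e(1)] by blast
      qed
      thus "cmod (gv v (map \<sigma> (inc v))) = 1" using gv_zero'[of v \<sigma>] v by simp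
    qed
    also have "(\<Prod>v\<in>V \<inter> VV ends X. cmod (gv v (map \<sigma> (inc v)))) \<le> r1 ^ ?m"
    proof (rule prod_le_power)
      fix v assume v: "v \<in> V \<inter> VV ends X"
      have "set (map \<sigma> (inc v)) \<subseteq> {0..\<kappa>}" using vals unfolding set_map set_inc by auto
      thus "0 \<le> cmod (gv v (map \<sigma> (inc v))) \<and> cmod (gv v (map \<sigma> (inc v))) \<le> r1"
        using gv_bound[of v "map \<sigma> (inc v)"] v by simp
    next
      show "card (V \<inter> VV ends X) \<le> ?m" using fVV by (simp add: card_mono)
    qed (rule r1_ge)
    finally show ?thesis by simp
  qed
  have "cmod (Phi t X) \<le> (\<Sum>\<sigma>\<in>Pset X. cmod (weight t \<sigma>))" unfolding Phi_def by (rule norm_sum)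
  also have "\<dots> \<le> (\<Sum>\<sigma>\<in>Pset X. r1 ^ ?m * (\<Prod>e\<in>E. cmod (wt t (\<sigma> e))))"
  proof (rule sum_mono)
    fix \<sigma> assume s: "\<sigma> \<in> Pset X"
    have "cmod (weight t \<sigma>) = cmod (\<Prod>v\<in>V. gv v (map \<sigma> (inc v))) * (\<Prod>e\<in>E. cmod (wt t (\<sigma> e)))"
      unfolding weight_def by (simp add: norm_mult prod_norm)
    also have "\<dots> \<le> r1 ^ ?m * (\<Prod>e\<in>E. cmod (wt t (\<sigma> e)))"
      by (rule mult_right_mono[OF vb[OF s]]) (simp add: prod_nonneg)
    finally show "cmod (weight t \<sigma>) \<le> r1 ^ ?m * (\<Prod>e\<in>E. cmod (wt t (\<sigma> e)))" .
  qed
  also have "\<dots> = r1 ^ ?m * (\<Sum>\<sigma>\<in>Pset X. \<Prod>e\<in>E. cmod (wt t (\<sigma> e)))"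
    by (simp add: sum_distrib_left)
  also have "(\<Sum>\<sigma>\<in>Pset X. \<Prod>e\<in>E. cmod (wt t (\<sigma> e)))
      = (\<Prod>e\<in>E. \<Sum>i\<in>(if e \<in> X then {1..\<kappa>} else {0}). cmod (wt t i))"
    unfolding Pset_def by (rule prod_sum_PiE[symmetric]) auto
  also have "\<dots> = (\<Prod>e\<in>E. if e \<in> X then ?b else 1)"
    by (rule prod.cong[OF refl]) (simp add: wt_def)
  also have "\<dots> = ?b ^ card X"
  proof -
    have "(\<Prod>e\<in>E. if e \<in> X then ?b else 1) = (\<Prod>e\<in>E \<inter> {e. e \<in> X}. ?b) * (\<Prod>e\<in>E \<inter> - {e. e \<in> X}. 1)"
      by (rule prod.If_cases) simp
    moreover have "E \<inter> {e. e \<in> X} = X" using X by blast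
    ultimately show ?thesis by simp
  qed
  finally show ?thesis .
qed

lemma poly_P_eq: "poly_P \<kappa> V ends es \<pi> z t = (\<Sum>\<sigma>\<in>PiE E (\<lambda>_. {0..\<kappa>}). weight t \<sigma>)"
proof -
  define z' where "z' = (\<lambda>i. if i = 0 then z 0 else t * z i)"
  define c where "c = z 0 ^ length es * (\<Prod>v\<in>V. zero_val (\<pi> v))"
  have cne: "c \<noteq> 0" unfolding c_def using z0 zv_ne finV by (simp add: prod_zero_iff)
  have z'e: "z' i = z 0 * wt t i" for i unfolding z'_def wt_def using z0 by simp
  have trm: "(\<Prod>v\<in>V. snd (\<pi> v) (map \<sigma> (inc_edges ends es v))) * (\<Prod>i=0..\<kappa>. z' i ^ card {e\<in>E. \<sigma> e = i})
        = c * weight t \<sigma>" if s: "\<sigma> \<in> PiE E (\<lambda>_. {0..\<kappa>})" for \<sigma>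
  proof -
    have ST: "\<sigma> ` E \<subseteq> {0..\<kappa>}" using PiE_mem[OF s] by blast
    have "(\<Prod>i=0..\<kappa>. z' i ^ card {e\<in>E. \<sigma> e = i}) = (\<Prod>i=0..\<kappa>. \<Prod>e\<in>{e. e\<in>E \<and> \<sigma> e = i}. z' (\<sigma> e))"
      by (rule prod.cong[OF refl]) simp
    also have "\<dots> = (\<Prod>e\<in>E. z' (\<sigma> e))" by (rule prod.group) (use ST in auto)
    also have "\<dots> = (\<Prod>e\<in>E. z 0 * wt t (\<sigma> e))" by (simp add: z'e)
    also have "\<dots> = z 0 ^ length es * (\<Prod>e\<in>E. wt t (\<sigma> e))"
      by (simp add: prod.distrib distinct_card[OF dist])
    finally have A: "(\<Prod>i=0..\<kappa>. z' i ^ card {e\<in>E. \<sigma> e = i}) = z 0 ^ length es * (\<Prod>e\<in>E. wt t (\<sigma> e))" .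
    have "(\<Prod>v\<in>V. snd (\<pi> v) (map \<sigma> (inc_edges ends es v))) = (\<Prod>v\<in>V. zero_val (\<pi> v) * gv v (map \<sigma> (inc v)))"
      by (rule prod.cong[OF refl]) (simp add: gv_def inc_def zv_ne)
    also have "\<dots> = (\<Prod>v\<in>V. zero_val (\<pi> v)) * (\<Prod>v\<in>V. gv v (map \<sigma> (inc v)))" by (rule prod.distrib)
    finally have B: "(\<Prod>v\<in>V. snd (\<pi> v) (map \<sigma> (inc_edges ends es v))) = (\<Prod>v\<in>V. zero_val (\<pi> v)) * (\<Prod>v\<in>V. gv v (map \<sigma> (inc v)))" .
    show ?thesis unfolding A B c_def weight_def by (simp only: mult_ac)
  qed
  have "partition_fn \<kappa> V ends es \<pi> z' = (\<Sum>\<sigma>\<in>PiE E (\<lambda>_. {0..\<kappa>}). c * weight t \<sigma>)"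
    unfolding partition_fn_def by (rule sum.cong[OF refl]) (rule trm)
  also have "\<dots> = c * (\<Sum>\<sigma>\<in>PiE E (\<lambda>_. {0..\<kappa>}). weight t \<sigma>)" by (simp add: sum_distrib_left)
  finally have "partition_fn \<kappa> V ends es \<pi> z' = c * (\<Sum>\<sigma>\<in>PiE E (\<lambda>_. {0..\<kappa>}). weight t \<sigma>)" .
  thus ?thesis unfolding poly_P_def z'_def[symmetric] c_def[symmetric] using cne by simp
qed

end


context setting begin

definition "\<Delta> = max_degree V ends es"

lemma deg_le: assumes v: "v \<in> V" shows "card {f\<in>E. v \<in> ends f} \<le> \<Delta>"
proof -
  have "card {f\<in>E. v \<in> ends f} = length (inc_edges ends es v)"
  proof -
    have "set (inc_edges ends es v) = {f\<in>E. v \<in> ends f}" by (simp add: inc_edges_def)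
    moreover have "distinct (inc_edges ends es v)" using dist by (simp add: inc_edges_def)
    ultimately show ?thesis by (metis distinct_card)
  qed
  also have "\<dots> \<le> \<Delta>" unfolding \<Delta>_def max_degree_def
    by (rule Max_ge) (use finV v in auto)
  finally show ?thesis .
qed

lemma Delta_pos: assumes "e \<in> E" shows "1 \<le> \<Delta>"
proof -
  obtain v where v: "v \<in> ends e" using ends_ne[OF assms] by blast
  have vV: "v \<in> V" using endsV[OF assms] v by blast
  have "e \<in> {f\<in>E. v \<in> ends f}" using assms v by simp
  hence "0 < card {f\<in>E. v \<in> ends f}" by (intro card_gt_0_iff[THEN iffD2]) auto
  thus ?thesis using deg_le[OF vV] by linarith
qed

lemma beta_bound:
  assumes tb: "cmod t \<le> 101/100"
    and hyp: "\<forall>i\<in>{1..\<kappa>}. cmod (z i) * (real \<Delta> * real \<kappa> * exp 2 * r1 * (r1+1)) \<le> cmod (z 0)"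
  shows "(\<Sum>i\<in>{1..\<kappa>}. cmod (wt t i)) * (real \<Delta> * exp 2 * r1 * (r1+1)) \<le> 101/100"
proof (cases "\<kappa> = 0")
  case True then show ?thesis by simp
next
  case False
  define K where "K = real \<Delta> * exp 2 * r1 * (r1+1)"
  have K0: "0 \<le> K" unfolding K_def using r1_ge by simp
  have z0p: "0 < cmod (z 0)" using z0 by simp
  have each: "cmod (wt t i) * K \<le> cmod t / real \<kappa>" if i: "i \<in> {1..\<kappa>}" for i
  proof -
    have h: "cmod (z i) * K * real \<kappa> \<le> cmod (z 0)" using hyp i unfolding K_def by (simp add: algebra_simps)
    have "cmod (wt t i) * K = cmod t * (cmod (z i) * K) / cmod (z 0)"
      using i by (simp add: wt_def norm_mult norm_divide)
    also have "\<dots> \<le> cmod t * (cmod (z 0) / real \<kappa>) / cmod (z 0)"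
    proof -
      have "cmod (z i) * K \<le> cmod (z 0) / real \<kappa>" using h False by (simp add: field_simps)
      thus ?thesis using z0p by (intro divide_right_mono mult_left_mono) auto
    qed
    also have "\<dots> = cmod t / real \<kappa>" using z0p by simp
    finally show ?thesis .
  qed
  have "(\<Sum>i\<in>{1..\<kappa>}. cmod (wt t i)) * K = (\<Sum>i\<in>{1..\<kappa>}. cmod (wt t i) * K)" by (simp add: sum_distrib_right)
  also have "\<dots> \<le> (\<Sum>i\<in>{1..\<kappa>}. cmod t / real \<kappa>)" by (rule sum_mono) (rule each)
  also have "\<dots> = cmod t" using False by simp
  finally show ?thesis unfolding K_def using tb by linarith
qed

lemma exps:
  fixes n k D :: nat
  assumes "n + k \<le> D * (k+1)" "1 \<le> k" "1 \<le> D"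
  shows "n - 1 \<le> (D-1)*(k+1)" "n - k \<le> (D-1)*(k+1)"
proof -
  have "(D-1)*(k+1) + (k+1) = D*(k+1)" using assms(3) by (cases D) (auto simp: algebra_simps)
  thus "n - 1 \<le> (D-1)*(k+1)" "n - k \<le> (D-1)*(k+1)" using assms(1,2) by linarith+
qed

lemma pointwise:
  fixes p q :: real and k m n :: nat and \<beta> D :: real
  assumes p: "0 < p" "p < 1" and q: "0 < q" "q < 1" and k: "1 \<le> k"
    and Phib: "c \<le> r1 ^ m * \<beta> ^ k" and mk: "m \<le> k + 1" and b0: "0 \<le> \<beta>"
    and main: "r1^(k+1) * \<beta>^k \<le> q * p^(k-1) * (1-p)^(n-k) * (1-q)^(n-1)"
  shows "c / (1-q)^(n-1) \<le> (q/p) * (p^k * (1-p)^(n-k))"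
proof -
  have "c \<le> r1^(k+1) * \<beta>^k"
    using Phib power_increasing[OF mk, of r1] r1_ge b0 by (meson mult_right_mono order_trans zero_le_power)
  also note main
  finally have c: "c \<le> q * p^(k-1) * (1-p)^(n-k) * (1-q)^(n-1)" .
  have qpos: "0 < (1-q)^(n-1)" using q by simp
  have "c / (1-q)^(n-1) \<le> q * p^(k-1) * (1-p)^(n-k)"
    using c qpos by (simp add: divide_le_eq)
  also have "\<dots> = (q/p) * (p^k * (1-p)^(n-k))"
  proof -
    have "p^k = p * p^(k-1)" using k by (metis Suc_diff_le diff_Suc_1 power_Suc)
    thus ?thesis using p by (simp add: field_simps)
  qed
  finally show ?thesis .
qed

lemma Z_nonzero:
  assumes tb: "cmod t \<le> 101/100"
    and hyp: "\<forall>i\<in>{1..\<kappa>}. cmod (z i) * (real \<Delta> * real \<kappa> * exp 2 * r1 * (r1+1)) \<le> cmod (z 0)"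
  shows "Zs (Phi t) E \<noteq> 0"
proof (cases "E = {}")
  case True
  have "Zs (Phi t) E = Phi t {}" unfolding Zs_def True Pow_empty by simp
  thus ?thesis by (simp add: Phi_empty)
next
  case False
  then obtain e0 where "e0 \<in> E" by (meson equals0I)
  hence D1: "1 \<le> \<Delta>" by (rule Delta_pos)
  define D where "D = real \<Delta>"
  have Dpos: "0 < D" unfolding D_def using D1 by simp
  define p where "p = (11/100) / D"
  define q where "q = (34/100) / D"
  have p: "0 < p" "p < 1" unfolding p_def using D1 Dpos by (auto simp: field_simps D_def)
  have q: "0 < q" "q < 1" unfolding q_def using D1 Dpos by (auto simp: field_simps D_def)
  define \<beta> where "\<beta> = (\<Sum>i\<in>{1..\<kappa>}. cmod (wt t i))"
  have b0: "0 \<le> \<beta>" unfolding \<beta>_def by (simp add: sum_nonneg)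
  have bb: "\<beta> * (D * exp 2 * r1 * (r1+1)) \<le> 101/100"
    unfolding \<beta>_def D_def using beta_bound[OF tb hyp] .
  have rf: "\<forall>x\<in>E. ead ends x x" using ends_ne by (simp add: ead_def)
  have ep: "exp (-(11/100)) \<le> (1 - p)^(\<Delta>-1)"
    unfolding p_def D_def using one_minus_pow_ge[of "11/100" \<Delta>] D1 by simp
  have eq: "exp (-(34/100)) \<le> (1 - q)^(\<Delta>-1)"
    unfolding q_def D_def using one_minus_pow_ge[of "34/100" \<Delta>] D1 by simp
  have fE: "finite E" by simp
  show ?thesis
  proof (rule conjunct1[OF dobrushin[of E "ead ends" "Phi t" q E]])
    fix A e g Y assume A: "A \<subseteq> E" "e \<in> A" "g \<subseteq> A" "conn (ead ends) g e" "Y \<subseteq> A - nbh (ead ends) A g"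
    have sep: "\<forall>h\<in>g. \<forall>y\<in>Y. ends h \<inter> ends y = {}"
    proof (intro ballI)
      fix h y assume h: "h \<in> g" and y: "y \<in> Y"
      show "ends h \<inter> ends y = {}"
      proof (rule ccontr)
        assume "ends h \<inter> ends y \<noteq> {}"
        hence "y \<in> nbh (ead ends) A g" using h y A(5) unfolding nbh_def ead_def by blast
        thus False using y A(5) by blast
      qed
    qed
    show "Phi t (g \<union> Y) = Phi t g * Phi t Y"
      by (rule Phi_mult[OF _ _ sep]) (use A in blast)+
  next
    fix A e assume A: "A \<subseteq> E" and e: "e \<in> A"
    have fA: "finite A" using A finite_subset by blast
    have rfA: "\<forall>x\<in>A. ead ends x x" using rf A by blast
    let ?G = "{g. g \<subseteq> A \<and> conn (ead ends) g e}"
    have pw: "cmod (Phi t g) / (1-q)^(card (nbh (ead ends) A g) - 1)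
              \<le> (q/p) * (p^card g * (1-p)^(card (nbh (ead ends) A g) - card g))" if g: "g \<in> ?G" for g
    proof -
      define k where "k = card g"
      define n where "n = card (nbh (ead ends) A g)"
      define m where "m = card (VV ends g)"
      have gA: "g \<subseteq> A" and c: "conn (ead ends) g e" using g by auto
      have fg: "finite g" using gA fA finite_subset by blast
      have eg: "e \<in> g" using c by (simp add: conn_def)
      have k1: "1 \<le> k" unfolding k_def using eg fg by (metis One_nat_def Suc_leI card_gt_0_iff empty_iff)
      have gE: "g \<subseteq> E" using gA A by blast
      have two_g: "\<forall>f\<in>g. card (ends f) = 2" using two gE by blast
      have mk: "m \<le> k + 1" unfolding m_def k_def by (rule vcount[OF fg c two_g])
      have VVV: "VV ends g \<subseteq> V" unfolding VV_def using gE endsV by blast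
      have deg: "\<forall>v\<in>VV ends g. card {f\<in>E. v \<in> ends f} \<le> \<Delta>" using deg_le VVV by blast
      have nk: "n + k \<le> \<Delta> * m" unfolding n_def k_def m_def
        by (rule dcount[OF fE gA A two deg])
      have nk2: "n + k \<le> \<Delta> * (k+1)" using nk mk by (meson le_trans mult_le_mono2)
      have ex1: "n - 1 \<le> (\<Delta>-1)*(k+1)" and ex2: "n - k \<le> (\<Delta>-1)*(k+1)" using exps[OF nk2 k1 D1] by auto
      have Phib: "cmod (Phi t g) \<le> r1 ^ m * \<beta> ^ k" unfolding m_def k_def \<beta>_def by (rule Phi_bound[OF gE])
      have kr: "r1^(k+1) * \<beta>^k \<le> (34/100/D) * (11/100/D)^(k-1) * (exp(-11/100) * exp(-34/100))^(k+1)"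
        by (rule key_real[OF r1_ge Dpos k1 b0 bb])
      have "(exp(-11/100) * exp(-34/100))^(k+1) \<le> ((1-p)^(\<Delta>-1) * (1-q)^(\<Delta>-1))^(k+1)"
        by (rule power_mono, rule mult_mono) (use ep eq p q in auto)
      also have "\<dots> = (1-p)^((\<Delta>-1)*(k+1)) * (1-q)^((\<Delta>-1)*(k+1))"
        by (simp only: power_mult power_mult_distrib)
      also have "\<dots> \<le> (1-p)^(n-k) * (1-q)^(n-1)"
        by (rule mult_mono, (rule power_decreasing; use ex1 ex2 p q in auto)+) (use p q in auto)
      finally have ee: "(exp(-11/100) * exp(-34/100))^(k+1) \<le> (1-p)^(n-k) * (1-q)^(n-1)" .
      have "r1^(k+1) * \<beta>^k \<le> q * p^(k-1) * ((1-p)^(n-k) * (1-q)^(n-1))"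
        using kr unfolding p_def[symmetric] q_def[symmetric]
        by (rule order_trans) (rule mult_left_mono[OF ee], use p q in simp)
      hence main: "r1^(k+1) * \<beta>^k \<le> q * p^(k-1) * (1-p)^(n-k) * (1-q)^(n-1)" by (simp add: mult_ac)
      show ?thesis using pointwise[OF p q k1 Phib mk b0 main] unfolding n_def k_def .
    qed
    have "(\<Sum>g\<in>?G. cmod (Phi t g) / (1-q)^(card (nbh (ead ends) A g) - 1))
          \<le> (\<Sum>g\<in>?G. (q/p) * (p^card g * (1-p)^(card (nbh (ead ends) A g) - card g)))"
      by (rule sum_mono) (rule pw)
    also have "\<dots> = (q/p) * (\<Sum>g\<in>?G. p^card g * (1-p)^(card (nbh (ead ends) A g) - card g))"
      by (simp add: sum_distrib_left)
    also have "\<dots> = (q/p) * p" using count_ident[where ad="ead ends", OF fA e rfA p] by simp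
    also have "\<dots> = q" using p by simp
    finally show "(\<Sum>g\<in>?G. cmod (Phi t g) / (1-q)^(card (nbh (ead ends) A g) - 1)) \<le> q" .
  qed (use fE rf q in \<open>simp_all add: Phi_empty\<close>)
qed

end


lemma log_taylor_summable:
  fixes Q :: "complex \<Rightarrow> complex" and R :: real
  assumes hol: "Q holomorphic_on ball 0 R" and R: "1 < R" and nz: "\<And>t. t \<in> ball 0 R \<Longrightarrow> Q t \<noteq> 0"
    and Q0: "Q 0 = 1"
  shows "summable (\<lambda>n. cmod ((deriv ^^ n) (\<lambda>t. Ln (Q t)) 0 / fact n))"
proof -
  have z0: "(0::complex) \<in> ball 0 R" using R by simp
  obtain g where g: "g holomorphic_on ball 0 R" and ge: "\<And>x. x \<in> ball 0 R \<Longrightarrow> exp (g x) = Q x"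
    using holomorphic_logarithm_exists[OF convex_ball open_ball hol nz z0] by blast
  define h where "h x = g x - g 0" for x
  have hh: "h holomorphic_on ball 0 R" unfolding h_def by (intro holomorphic_intros g)
  have eg0: "exp (g 0) = 1" using ge[OF z0] Q0 by simp
  have he: "exp (h x) = Q x" if "x \<in> ball 0 R" for x
    unfolding h_def using ge[OF that] eg0 by (simp add: exp_diff)
  have h0: "h 0 = 0" unfolding h_def by simp
  have ch: "continuous_on (ball 0 R) h" using hh holomorphic_on_imp_continuous_on by blast
  have "isCont h 0" using ch z0 continuous_on_eq_continuous_at open_ball by blast
  hence "(h \<longlongrightarrow> 0) (at 0)" using h0 by (simp add: isCont_def)
  hence ev1: "eventually (\<lambda>x. cmod (h x) < 1) (at 0)"
    by (rule order_tendstoD(2)[OF tendsto_norm, of h 0 "at 0" 1, simplified])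
  have ev2: "eventually (\<lambda>x. cmod (h x) < 1) (nhds 0)"
  proof -
    have "eventually (\<lambda>x. x \<noteq> 0 \<longrightarrow> cmod (h x) < 1) (nhds 0)"
      using ev1 by (simp add: eventually_at_filter)
    thus ?thesis by (rule eventually_mono) (metis h0 norm_zero zero_less_one)
  qed
  have ev3: "eventually (\<lambda>x. x \<in> ball 0 R) (nhds (0::complex))"
    using z0 by (intro eventually_nhds_in_open) auto
  have ev: "eventually (\<lambda>x. Ln (Q x) = h x) (nhds 0)"
    using ev2 ev3
  proof eventually_elim
    case (elim x)
    have "\<bar>Im (h x)\<bar> \<le> cmod (h x)" by (rule abs_Im_le_cmod)
    hence "-pi < Im (h x)" "Im (h x) \<le> pi" using elim(1) pi_gt3 by linarith+
    thus ?case using he[OF elim(2)] Ln_exp by metis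
  qed
  have dd: "(deriv ^^ n) (\<lambda>t. Ln (Q t)) 0 = (deriv ^^ n) h 0" for n
    by (rule higher_deriv_cong_ev[OF ev refl])
  define r where "r = (1 + R) / 2"
  have r: "1 < r" "r < R" unfolding r_def using R by auto
  have sub: "cball 0 r \<subseteq> ball (0::complex) R" using r by auto
  have chr: "continuous_on (cball 0 r) h" using ch sub continuous_on_subset by blast
  have "compact (h ` cball 0 r)" by (rule compact_continuous_image[OF chr compact_cball])
  then obtain B where B: "B > 0" "\<And>y. y \<in> h ` cball 0 r \<Longrightarrow> norm y \<le> B"
    using compact_imp_bounded bounded_pos by metis
  have fin: "h w \<in> ball 0 (B+1)" if "w \<in> ball 0 r" for w
    using B(2)[of "h w"] that by auto
  have bnd: "cmod ((deriv ^^ n) h 0 / fact n) \<le> (B+1) * (1/r)^n" if n: "n \<ge> 1" for n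
  proof -
    have "cmod ((deriv ^^ n) h 0) \<le> fact n * (B+1) / r^n"
      by (rule Cauchy_higher_deriv_bound[OF holomorphic_on_subset[OF hh] chr fin])
         (use r n sub in auto)
    thus ?thesis by (simp add: norm_divide field_simps power_divide)
  qed
  have sg: "summable (\<lambda>n. (B+1) * (1/r)^n)"
    by (rule summable_mult, rule summable_geometric) (use r in auto)
  show ?thesis unfolding dd
    by (rule summable_comparison_test[OF _ sg]) (use bnd in \<open>auto intro!: exI[of _ 1]\<close>)
qed

context setting begin

lemma wt_hol: "(\<lambda>t. wt t i) holomorphic_on S"
  by (cases "i = 0") (simp_all add: wt_def holomorphic_intros)

lemma Q_eq: "(\<lambda>t. poly_P \<kappa> V ends es \<pi> z t) = (\<lambda>t. \<Sum>\<sigma>\<in>PiE E (\<lambda>_. {0..\<kappa>}). (\<Prod>v\<in>V. gv v (map \<sigma> (inc v))) * (\<Prod>e\<in>E. wt t (\<sigma> e)))"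
  using poly_P_eq by (simp add: weight_def)

lemma Q_hol: "(\<lambda>t. poly_P \<kappa> V ends es \<pi> z t) holomorphic_on S"
  unfolding Q_eq
  by (intro holomorphic_on_sum holomorphic_on_mult holomorphic_on_const holomorphic_on_prod wt_hol)

lemma Q0: "poly_P \<kappa> V ends es \<pi> z 0 = 1"
proof -
  have "Phi 0 X = 0" if X: "X \<in> Pow E - {{}}" for X
  proof -
    obtain e where e: "e \<in> X" using X by blast
    have XE: "X \<subseteq> E" using X by blast
    have "weight 0 \<sigma> = 0" if s: "\<sigma> \<in> Pset X" for \<sigma>
    proof -
      have "\<sigma> e \<in> {1..\<kappa>}" by (rule Pset_in[OF s XE e])
      hence "wt 0 (\<sigma> e) = 0" by (simp add: wt_def)
      moreover have "e \<in> E" using XE e by blast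
      ultimately have "(\<Prod>e\<in>E. wt 0 (\<sigma> e)) = 0" by (meson finite_set prod_zero)
      thus ?thesis by (simp add: weight_def)
    qed
    thus ?thesis unfolding Phi_def by simp
  qed
  hence "Zs (Phi 0) E = Phi 0 {}"
    unfolding Zs_def by (subst sum.remove[of _ "{}"]) auto
  thus ?thesis using poly_P_eq sum_weight Phi_empty by simp
qed

lemma Q_nz: assumes "cmod t \<le> 101/100"
    and hyp: "\<forall>i\<in>{1..\<kappa>}. cmod (z i) * (real \<Delta> * real \<kappa> * exp 2 * r1 * (r1+1)) \<le> cmod (z 0)"
  shows "poly_P \<kappa> V ends es \<pi> z t \<noteq> 0"
  using Z_nonzero[OF assms] poly_P_eq sum_weight by simp

end

theorem mainTheorem9:
  fixes F :: "sig set" and \<kappa> :: nat and V :: "'v set" and ends :: "'e \<Rightarrow> 'v set"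
    and es :: "'e list" and \<pi> :: "'v \<Rightarrow> sig" and z :: "nat \<Rightarrow> complex"
  assumes "finite F" and "\<forall>f\<in>F. in_F0 f"
    and "is_graph V ends es"
    and "\<forall>v\<in>V. \<pi> v \<in> F \<and> fst (\<pi> v) = length (inc_edges ends es v)"
    and "z 0 \<noteq> 0"
    and "\<forall>i\<in>{1..\<kappa>}. cmod (z i) * (real (max_degree V ends es) * real \<kappa> * exp 2
            * max 1 (ratio_rF \<kappa> F) * (max 1 (ratio_rF \<kappa> F) + 1)) \<le> cmod (z 0)"
  shows "partition_fn \<kappa> V ends es \<pi> z \<noteq> 0 \<and>
    summable (\<lambda>n. cmod ((deriv ^^ n) (\<lambda>t. Ln (poly_P \<kappa> V ends es \<pi> z t)) 0 / fact n))"
proof -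
  interpret S: setting \<kappa> V ends es \<pi> z F using assms(1-5) by unfold_locales
  have hyp: "\<forall>i\<in>{1..\<kappa>}. cmod (z i) * (real S.\<Delta> * real \<kappa> * exp 2 * S.r1 * (S.r1+1)) \<le> cmod (z 0)"
    using assms(6) unfolding S.\<Delta>_def S.r1_def .
  have nz: "\<And>t. cmod t \<le> 101/100 \<Longrightarrow> poly_P \<kappa> V ends es \<pi> z t \<noteq> 0"
    using S.Q_nz hyp by blast
  have part: "partition_fn \<kappa> V ends es \<pi> z \<noteq> 0"
  proof
    assume "partition_fn \<kappa> V ends es \<pi> z = 0"
    moreover have "(\<lambda>i. if i = 0 then z 0 else 1 * z i) = z" by (rule ext) simp
    ultimately have "poly_P \<kappa> V ends es \<pi> z 1 = 0" by (simp add: poly_P_def)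
    thus False using nz[of 1] by simp
  qed
  have sm: "summable (\<lambda>n. cmod ((deriv ^^ n) (\<lambda>t. Ln (poly_P \<kappa> V ends es \<pi> z t)) 0 / fact n))"
  proof (rule log_taylor_summable[where R="101/100"])
    show "(\<lambda>t. poly_P \<kappa> V ends es \<pi> z t) holomorphic_on ball 0 (101/100)" by (rule S.Q_hol)
    show "\<And>t. t \<in> ball 0 (101/100) \<Longrightarrow> poly_P \<kappa> V ends es \<pi> z t \<noteq> 0" using nz by auto
    show "poly_P \<kappa> V ends es \<pi> z 0 = 1" by (rule S.Q0)
  qed simp
  show ?thesis using part sm by blast
qed


end
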